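(* Let $\Bbbk$ be algebraically closed, $T$ a torus acting linearly on a finite-dimensional $\Bbbk$-vector space $V$, $X\subseteq\mathbb PV$ a closed $T$-invariant subscheme with $X^T$ finite, and $S:\mathbb G_m\to T$ with $X^S=X^T$. If $Y\subseteq X$ is an irreducible component, then its unique supporting fixed point $\min(Y)$ is also a supporting fixed point of $X$. In particular, for every $f\in X^T$, every irreducible component of $\overline{X_f}$ contains $f$.
   Context: For a closed $S$-invariant subset $Z\subseteq X$ and $f\in Z^T$, $Z_f=\{z\in Z:\lim_{t\to0}S(t)\cdot z=f\}$ is the B-B stratum. A point $f\in Z^T$ is a supporting fixed point of $Z$ if $Z_f$ contains a nonempty open subset of $Z$. An irreducible $Y$ has exactly one supporting fixed point, denoted $\min(Y)$. *)

theory Defs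
  imports Main "HOL-Computational_Algebra.Polynomial"
begin

definition alg_closed :: "'k::field itself \<Rightarrow> bool" where
  "alg_closed _ \<longleftrightarrow> (\<forall>p :: 'k poly. degree p > 0 \<longrightarrow> (\<exists>x. poly p x = 0))"

definition torus :: "('r \<Rightarrow> 'k::field) set" where
  "torus = {t. \<forall>i. t i \<noteq> 0}"

definition tmul :: "('r \<Rightarrow> 'k::field) \<Rightarrow> ('r \<Rightarrow> 'k) \<Rightarrow> ('r \<Rightarrow> 'k)" where
  "tmul t s = (\<lambda>i. t i * s i)"

definition tone :: "'r \<Rightarrow> 'k::field" where
  "tone = (\<lambda>_. 1)"

inductive_set laurent :: "(('r \<Rightarrow> 'k::field) \<Rightarrow> 'k) set" where
  lconst: "(\<lambda>_. c) \<in> laurent"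
| lvar: "(\<lambda>t. t i) \<in> laurent"
| linv: "(\<lambda>t. inverse (t i)) \<in> laurent"
| ladd: "f \<in> laurent \<Longrightarrow> g \<in> laurent \<Longrightarrow> (\<lambda>t. f t + g t) \<in> laurent"
| lmul: "f \<in> laurent \<Longrightarrow> g \<in> laurent \<Longrightarrow> (\<lambda>t. f t * g t) \<in> laurent"

definition mat_apply :: "('n::finite \<Rightarrow> 'n \<Rightarrow> 'k::field) \<Rightarrow> ('n \<Rightarrow> 'k) \<Rightarrow> ('n \<Rightarrow> 'k)" where
  "mat_apply A x = (\<lambda>i. \<Sum>j\<in>UNIV. A i j * x j)"

definition mat_mul :: "('n::finite \<Rightarrow> 'n \<Rightarrow> 'k::field) \<Rightarrow> ('n \<Rightarrow> 'n \<Rightarrow> 'k) \<Rightarrow> ('n \<Rightarrow> 'n \<Rightarrow> 'k)" where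
  "mat_mul A B = (\<lambda>i j. \<Sum>l\<in>UNIV. A i l * B l j)"

definition mat_id :: "'n \<Rightarrow> 'n \<Rightarrow> 'k::field" where
  "mat_id = (\<lambda>i j. if i = j then 1 else 0)"

text \<open>A linear action of T on V: a homomorphism of algebraic groups T \<rightarrow> GL(V),
  i.e. matrix entries are regular (Laurent polynomial) functions on T and
  the map is multiplicative with rho(1) = id.\<close>
definition torus_rep :: "(('r \<Rightarrow> 'k::field) \<Rightarrow> ('n::finite \<Rightarrow> 'n \<Rightarrow> 'k)) \<Rightarrow> bool" where
  "torus_rep \<rho> \<longleftrightarrow>
     (\<forall>i j. \<exists>g\<in>laurent. \<forall>t\<in>torus. \<rho> t i j = g t) \<and>
     \<rho> tone = mat_id \<and>
     (\<forall>t\<in>torus. \<forall>s\<in>torus. \<rho> (tmul t s) = mat_mul (\<rho> t) (\<rho> s))"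

definition cochar :: "('r \<Rightarrow> int) \<Rightarrow> 'k::field \<Rightarrow> ('r \<Rightarrow> 'k)" where
  "cochar a c = (\<lambda>i. c powi a i)"

inductive_set polyfun :: "(('n \<Rightarrow> 'k::field) \<Rightarrow> 'k) set" where
  pconst: "(\<lambda>_. c) \<in> polyfun"
| pvar: "(\<lambda>x. x i) \<in> polyfun"
| padd: "f \<in> polyfun \<Longrightarrow> g \<in> polyfun \<Longrightarrow> (\<lambda>x. f x + g x) \<in> polyfun"
| pmul: "f \<in> polyfun \<Longrightarrow> g \<in> polyfun \<Longrightarrow> (\<lambda>x. f x * g x) \<in> polyfun"

definition homog :: "nat \<Rightarrow> (('n \<Rightarrow> 'k::field) \<Rightarrow> 'k) \<Rightarrow> bool" where
  "homog d f \<longleftrightarrow> f \<in> polyfun \<and> (\<forall>c x. f (\<lambda>i. c * x i) = c ^ d * f x)"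

definition nonzero_vec :: "('n \<Rightarrow> 'k::field) \<Rightarrow> bool" where
  "nonzero_vec x \<longleftrightarrow> (\<exists>i. x i \<noteq> 0)"

text \<open>The point of PV spanned by a nonzero vector x: the line minus the origin.\<close>
definition line :: "('n \<Rightarrow> 'k::field) \<Rightarrow> ('n \<Rightarrow> 'k) set" where
  "line x = {(\<lambda>i. c * x i) | c. c \<noteq> 0}"

definition PP :: "('n \<Rightarrow> 'k::field) set set" where
  "PP = {line x | x. nonzero_vec x}"

definition zclosed :: "('n \<Rightarrow> 'k::field) set set \<Rightarrow> bool" where
  "zclosed Z \<longleftrightarrow> (\<exists>F. (\<forall>f\<in>F. \<exists>d. homog d f) \<and>
                      Z = {p\<in>PP. \<forall>f\<in>F. \<forall>x\<in>p. f x = 0})"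

definition zopen_in :: "('n \<Rightarrow> 'k::field) set set \<Rightarrow> ('n \<Rightarrow> 'k) set set \<Rightarrow> bool" where
  "zopen_in Z U \<longleftrightarrow> U \<subseteq> Z \<and> zclosed (Z - U)"

definition zclosure :: "('n \<Rightarrow> 'k::field) set set \<Rightarrow> ('n \<Rightarrow> 'k) set set" where
  "zclosure A = \<Inter>{C. zclosed C \<and> A \<subseteq> C}"

definition irreducible_closed :: "('n \<Rightarrow> 'k::field) set set \<Rightarrow> bool" where
  "irreducible_closed Z \<longleftrightarrow> zclosed Z \<and> Z \<noteq> {} \<and>
     (\<forall>A B. zclosed A \<and> zclosed B \<and> Z \<subseteq> A \<union> B \<longrightarrow> Z \<subseteq> A \<or> Z \<subseteq> B)"

definition irr_component :: "('n \<Rightarrow> 'k::field) set set \<Rightarrow> ('n \<Rightarrow> 'k) set set \<Rightarrow> bool" where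
  "irr_component Y X \<longleftrightarrow> Y \<subseteq> X \<and> irreducible_closed Y \<and>
     (\<forall>W. irreducible_closed W \<and> Y \<subseteq> W \<and> W \<subseteq> X \<longrightarrow> W = Y)"

definition act :: "(('r \<Rightarrow> 'k::field) \<Rightarrow> ('n::finite \<Rightarrow> 'n \<Rightarrow> 'k)) \<Rightarrow> ('r \<Rightarrow> 'k)
                   \<Rightarrow> ('n \<Rightarrow> 'k) set \<Rightarrow> ('n \<Rightarrow> 'k) set" where
  "act \<rho> t p = mat_apply (\<rho> t) ` p"

definition T_invariant :: "(('r \<Rightarrow> 'k::field) \<Rightarrow> ('n::finite \<Rightarrow> 'n \<Rightarrow> 'k)) \<Rightarrow> ('n \<Rightarrow> 'k) set set \<Rightarrow> bool" where
  "T_invariant \<rho> X \<longleftrightarrow> (\<forall>t\<in>torus. \<forall>p\<in>X. act \<rho> t p \<in> X)"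

definition T_fixed :: "(('r \<Rightarrow> 'k::field) \<Rightarrow> ('n::finite \<Rightarrow> 'n \<Rightarrow> 'k)) \<Rightarrow> ('n \<Rightarrow> 'k) set set \<Rightarrow> ('n \<Rightarrow> 'k) set set" where
  "T_fixed \<rho> Z = {p\<in>Z. \<forall>t\<in>torus. act \<rho> t p = p}"

definition S_fixed :: "(('r \<Rightarrow> 'k::field) \<Rightarrow> ('n::finite \<Rightarrow> 'n \<Rightarrow> 'k)) \<Rightarrow> ('r \<Rightarrow> int)
                       \<Rightarrow> ('n \<Rightarrow> 'k) set set \<Rightarrow> ('n \<Rightarrow> 'k) set set" where
  "S_fixed \<rho> a Z = {p\<in>Z. \<forall>c. c \<noteq> 0 \<longrightarrow> act \<rho> (cochar a c) p = p}"

text \<open>lim_{c \<rightarrow> 0} S(c) z = f: the orbit map G_m \<rightarrow> PV, c \<mapsto> S(c) z, extends to a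
  morphism A^1 \<rightarrow> PV sending 0 to f.  Morphisms A^1 \<rightarrow> PV are given by tuples of
  univariate polynomials without common zero.\<close>
definition bb_limit :: "(('r \<Rightarrow> 'k::field) \<Rightarrow> ('n::finite \<Rightarrow> 'n \<Rightarrow> 'k)) \<Rightarrow> ('r \<Rightarrow> int)
                        \<Rightarrow> ('n \<Rightarrow> 'k) set \<Rightarrow> ('n \<Rightarrow> 'k) set \<Rightarrow> bool" where
  "bb_limit \<rho> a z f \<longleftrightarrow>
     (\<exists>\<phi> :: 'n \<Rightarrow> 'k poly.
        nonzero_vec (\<lambda>i. poly (\<phi> i) 0) \<and> line (\<lambda>i. poly (\<phi> i) 0) = f \<and>
        (\<forall>c. c \<noteq> 0 \<longrightarrow> nonzero_vec (\<lambda>i. poly (\<phi> i) c) \<and>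
                         line (\<lambda>i. poly (\<phi> i) c) = act \<rho> (cochar a c) z))"

definition bb_stratum :: "(('r \<Rightarrow> 'k::field) \<Rightarrow> ('n::finite \<Rightarrow> 'n \<Rightarrow> 'k)) \<Rightarrow> ('r \<Rightarrow> int)
                          \<Rightarrow> ('n \<Rightarrow> 'k) set set \<Rightarrow> ('n \<Rightarrow> 'k) set \<Rightarrow> ('n \<Rightarrow> 'k) set set" where
  "bb_stratum \<rho> a Z f = {z\<in>Z. bb_limit \<rho> a z f}"

definition supporting_fp :: "(('r \<Rightarrow> 'k::field) \<Rightarrow> ('n::finite \<Rightarrow> 'n \<Rightarrow> 'k)) \<Rightarrow> ('r \<Rightarrow> int)
                             \<Rightarrow> ('n \<Rightarrow> 'k) set set \<Rightarrow> ('n \<Rightarrow> 'k) set \<Rightarrow> bool" where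
  "supporting_fp \<rho> a Z f \<longleftrightarrow> f \<in> T_fixed \<rho> Z \<and>
     (\<exists>U. U \<noteq> {} \<and> zopen_in Z U \<and> U \<subseteq> bb_stratum \<rho> a Z f)"

end

theory Submission
  imports Defs "HOL-Library.Function_Algebras"
begin


inductive_set span_in :: "'a::comm_ring_1 set \<Rightarrow> 'a set \<Rightarrow> 'a set" for R S where
  sp0: "0 \<in> span_in R S"
| spb: "s \<in> S \<Longrightarrow> s \<in> span_in R S"
| spa: "x \<in> span_in R S \<Longrightarrow> y \<in> span_in R S \<Longrightarrow> x + y \<in> span_in R S"
| spm: "r \<in> R \<Longrightarrow> x \<in> span_in R S \<Longrightarrow> r * x \<in> span_in R S"

definition noeth :: "'a::comm_ring_1 set \<Rightarrow> bool" where
  "noeth R \<longleftrightarrow> (\<forall>S \<subseteq> R. \<exists>S0 \<subseteq> S. finite S0 \<and> S \<subseteq> span_in R S0)"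

definition subr :: "'a::comm_ring_1 set \<Rightarrow> bool" where
  "subr R \<longleftrightarrow> 0 \<in> R \<and> 1 \<in> R \<and> (\<forall>x\<in>R. \<forall>y\<in>R. x + y \<in> R \<and> x * y \<in> R \<and> - x \<in> R)"

lemma span_mono: "x \<in> span_in R S \<Longrightarrow> S \<subseteq> T \<Longrightarrow> x \<in> span_in R T"
  by (induction rule: span_in.induct) (auto intro: span_in.intros)

lemma span_span: "x \<in> span_in R T \<Longrightarrow> T \<subseteq> span_in R S \<Longrightarrow> x \<in> span_in R S"
  by (induction rule: span_in.induct) (auto intro: span_in.intros)

lemma span_sub: "x \<in> span_in R S \<Longrightarrow> subr R \<Longrightarrow> S \<subseteq> R \<Longrightarrow> x \<in> R"
  by (induction rule: span_in.induct) (auto simp: subr_def)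

lemma span_minus: "subr R \<Longrightarrow> x \<in> span_in R S \<Longrightarrow> y \<in> span_in R S \<Longrightarrow> x - y \<in> span_in R S"
proof -
  assume R: "subr R" and x: "x \<in> span_in R S" and y: "y \<in> span_in R S"
  have "(- 1) * y \<in> span_in R S" using R y by (intro spm) (auto simp: subr_def)
  then have "x + (- 1) * y \<in> span_in R S" using x by (intro spa)
  then show ?thesis by simp
qed

lemma span_finite: "x \<in> span_in R S \<Longrightarrow> \<exists>S'\<subseteq>S. finite S' \<and> x \<in> span_in R S'"
proof (induction rule: span_in.induct)
  case sp0 then show ?case by (auto intro: span_in.intros)
next
  case (spb s) then show ?case by (intro exI[of _ "{s}"]) (auto intro: span_in.intros)
next
  case (spa x y)
  then obtain A B where "A \<subseteq> S" "finite A" "x \<in> span_in R A" "B \<subseteq> S" "finite B" "y \<in> span_in R B" by blast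
  then have "x \<in> span_in R (A \<union> B)" "y \<in> span_in R (A \<union> B)"
    by (auto intro: span_mono)
  then have "x + y \<in> span_in R (A \<union> B)" by (rule span_in.spa)
  then show ?case using \<open>A \<subseteq> S\<close> \<open>B \<subseteq> S\<close> \<open>finite A\<close> \<open>finite B\<close>
    by (intro exI[of _ "A \<union> B"]) auto
next
  case (spm r x)
  then show ?case by (auto intro: span_in.intros)
qed

definition Rp :: "'a::comm_ring_1 set \<Rightarrow> 'a poly set" where
  "Rp R = {p. \<forall>i. coeff p i \<in> R}"

lemma sum_in_subr: "finite A \<Longrightarrow> subr R \<Longrightarrow> (\<And>i. i \<in> A \<Longrightarrow> f i \<in> R) \<Longrightarrow> sum f A \<in> R"
  by (induction A rule: finite_induct) (auto simp: subr_def)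

lemma subr_Rp:
  assumes R: "subr R" shows "subr (Rp R)"
proof -
  have m: "coeff (p * q) i \<in> R" if "p \<in> Rp R" "q \<in> Rp R" for p q i
    unfolding coeff_mult using that R
    by (intro sum_in_subr) (auto simp: Rp_def subr_def)
  show ?thesis using R m unfolding subr_def Rp_def
    by (auto simp: coeff_1)
qed

lemma hilbert:
  fixes R :: "'a::comm_ring_1 set"
  assumes R: "subr R" and NR: "noeth R"
  shows "noeth (Rp R)"
  unfolding noeth_def
proof (intro allI impI)
  fix S assume S: "S \<subseteq> Rp R"
  define I where "I = span_in (Rp R) S"
  have RRp: "subr (Rp R)" using R by (rule subr_Rp)
  have IRp: "I \<subseteq> Rp R" unfolding I_def using span_sub[OF _ RRp S] by blast
  have constRp: "[:r:] \<in> Rp R" if "r \<in> R" for r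
    using that R by (auto simp: Rp_def coeff_pCons subr_def split: nat.split)
  have monomRp: "monom 1 k \<in> Rp R" for k
    using R by (auto simp: Rp_def coeff_monom subr_def)
  have XRp: "[:0,1:] \<in> Rp R"
    using R by (auto simp: Rp_def coeff_pCons subr_def split: nat.split)
  have I0: "0 \<in> I" unfolding I_def by (rule sp0)
  have Iadd: "p + q \<in> I" if "p \<in> I" "q \<in> I" for p q
    using that unfolding I_def by (rule spa)
  have Imul: "r * p \<in> I" if "r \<in> Rp R" "p \<in> I" for r p
    using that unfolding I_def by (rule spm)
  have Iminus: "p - q \<in> I" if "p \<in> I" "q \<in> I" for p q
    using that RRp unfolding I_def by (intro span_minus)
  define L where "L d = {coeff p d | p. p \<in> I \<and> degree p \<le> d}" for d
  have LR: "L d \<subseteq> R" for d using IRp by (auto simp: L_def Rp_def)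
  have Lspan: "c \<in> L d" if "c \<in> span_in R (L d)" for c d
    using that
  proof (induction rule: span_in.induct)
    case sp0
    show ?case unfolding L_def using I0 by (intro CollectI exI[of _ 0]) auto
  next
    case (spb s) then show ?case .
  next
    case (spa x y)
    then obtain p q where "x = coeff p d" "p \<in> I" "degree p \<le> d" "y = coeff q d" "q \<in> I" "degree q \<le> d"
      unfolding L_def by blast
    then show ?case unfolding L_def
      by (intro CollectI exI[of _ "p + q"]) (auto intro: Iadd degree_add_le)
  next
    case (spm r x)
    then obtain p where "x = coeff p d" "p \<in> I" "degree p \<le> d"
      unfolding L_def by blast
    moreover have "[:r:] * p \<in> I" using spm(1) \<open>p \<in> I\<close> constRp Imul by blast
    moreover have "degree ([:r:] * p) \<le> d" using \<open>degree p \<le> d\<close>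
      by (simp add: degree_smult_le order_trans[OF degree_smult_le])
    ultimately show ?case unfolding L_def
      by (intro CollectI exI[of _ "[:r:] * p"]) auto
  qed
  have LSuc: "L d \<subseteq> L (Suc d)" for d
  proof
    fix c assume "c \<in> L d"
    then obtain p where "c = coeff p d" "p \<in> I" "degree p \<le> d"
      unfolding L_def by blast
    moreover have "[:0,1:] * p \<in> I" using \<open>p \<in> I\<close> XRp Imul by blast
    moreover have "[:0,1:] * p = pCons 0 p" by simp
    moreover have "degree (pCons 0 p) \<le> Suc d"
      using \<open>degree p \<le> d\<close> degree_pCons_le[of 0 p] by linarith
    ultimately show "c \<in> L (Suc d)" unfolding L_def
      by (intro CollectI exI[of _ "pCons 0 p"]) auto
  qed
  have Lmono: "d \<le> e \<Longrightarrow> L d \<subseteq> L e" for d e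
    using lift_Suc_mono_le[of L, OF LSuc] by blast
  have "(\<Union>d. L d) \<subseteq> R" using LR by blast
  with NR obtain L0 where L0: "L0 \<subseteq> (\<Union>d. L d)" "finite L0" "(\<Union>d. L d) \<subseteq> span_in R L0"
    unfolding noeth_def by meson
  have "\<forall>x\<in>L0. \<exists>d. x \<in> L d" using L0(1) by blast
  then obtain df where df: "\<forall>x\<in>L0. x \<in> L (df x)" by (auto dest!: bchoice)
  define D where "D = Max (df ` L0)"
  have "L0 \<subseteq> L D"
  proof
    fix x assume "x \<in> L0"
    then have "df x \<le> D" unfolding D_def using L0(2) by simp
    then show "x \<in> L D" using df \<open>x \<in> L0\<close> Lmono by blast
  qed
  then have LD: "L d \<subseteq> L D" for d
  proof -
    assume L0D: "L0 \<subseteq> L D"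
    show "L d \<subseteq> L D"
    proof
      fix c assume "c \<in> L d"
      then have "c \<in> span_in R L0" using L0(3) by blast
      then have "c \<in> span_in R (L D)" using L0D by (rule span_mono)
      then show "c \<in> L D" by (rule Lspan)
    qed
  qed
  have "\<forall>d. \<exists>M. M \<subseteq> L d \<and> finite M \<and> L d \<subseteq> span_in R M"
    using NR LR unfolding noeth_def by blast
  then obtain M where M0: "\<forall>d. M d \<subseteq> L d \<and> finite (M d) \<and> L d \<subseteq> span_in R (M d)"
    by (auto dest!: choice)
  then have M: "\<And>d. M d \<subseteq> L d" "\<And>d. finite (M d)" "\<And>d. L d \<subseteq> span_in R (M d)"
    by auto
  have "\<forall>d. \<exists>Pd. \<forall>m\<in>M d. Pd m \<in> I \<and> degree (Pd m) \<le> d \<and> coeff (Pd m) d = m"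
  proof
    fix d
    have "\<forall>m\<in>M d. \<exists>p. p \<in> I \<and> degree p \<le> d \<and> coeff p d = m"
      using M(1)[of d] unfolding L_def by blast
    then show "\<exists>Pd. \<forall>m\<in>M d. Pd m \<in> I \<and> degree (Pd m) \<le> d \<and> coeff (Pd m) d = m"
      by (rule bchoice)
  qed
  then obtain P where P0: "\<forall>d. \<forall>m\<in>M d. P d m \<in> I \<and> degree (P d m) \<le> d \<and> coeff (P d m) d = m"
    by (auto dest!: choice)
  then have P: "\<And>d m. m \<in> M d \<Longrightarrow> P d m \<in> I \<and> degree (P d m) \<le> d \<and> coeff (P d m) d = m"
    by auto
  define G where "G = (\<Union>d\<in>{..D}. P d ` M d)"
  have finG: "finite G" unfolding G_def using M(2) by auto
  have GI: "G \<subseteq> I" unfolding G_def using P by auto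
  have spanGI: "span_in (Rp R) G \<subseteq> I" unfolding I_def using GI span_span unfolding I_def by blast
  have claim1: "\<exists>q\<in>span_in (Rp R) G. degree q \<le> d \<and> coeff q d = c"
    if "d \<le> D" "c \<in> span_in R (M d)" for d c
    using that(2)
  proof (induction rule: span_in.induct)
    case sp0
    then show ?case by (intro bexI[of _ 0]) (auto intro: span_in.sp0)
  next
    case (spb m)
    then have "P d m \<in> G" unfolding G_def using that(1) by auto
    then show ?case using P[OF spb] by (intro bexI[of _ "P d m"]) (auto intro: span_in.spb)
  next
    case (spa x y)
    then obtain q1 q2 where "q1 \<in> span_in (Rp R) G" "degree q1 \<le> d" "coeff q1 d = x"
      "q2 \<in> span_in (Rp R) G" "degree q2 \<le> d" "coeff q2 d = y" by blast
    then show ?case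
      by (intro bexI[of _ "q1 + q2"]) (auto intro: span_in.spa degree_add_le)
  next
    case (spm r x)
    then obtain q where q: "q \<in> span_in (Rp R) G" "degree q \<le> d" "coeff q d = x" by blast
    have "[:r:] * q \<in> span_in (Rp R) G" using constRp[OF spm(1)] q(1) by (rule span_in.spm)
    moreover have "degree ([:r:] * q) \<le> d" using q(2)
      by (simp add: order_trans[OF degree_smult_le])
    ultimately show ?case using q(3)
      by (intro bexI[of _ "[:r:] * q"]) auto
  qed
  have claim2: "\<exists>q\<in>span_in (Rp R) G. degree q \<le> N \<and> coeff q N = c"
    if "c \<in> L N" for N c
  proof (cases "N \<le> D")
    case True
    then show ?thesis using claim1 M(3) that by blast
  next
    case False
    have "c \<in> span_in R (M D)" using LD M(3) that by blast
    then obtain q where q: "q \<in> span_in (Rp R) G" "degree q \<le> D" "coeff q D = c"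
      using claim1[of D] by blast
    have "monom 1 (N - D) * q \<in> span_in (Rp R) G" using monomRp q(1) by (rule span_in.spm)
    moreover have "degree (monom 1 (N - D) * q) \<le> N"
    proof -
      have "degree (monom (1::'a) (N - D)) \<le> N - D" by (rule degree_monom_le)
      then show ?thesis
        using degree_mult_le[of "monom 1 (N - D)" q] q(2) False by arith
    qed
    moreover have "coeff (monom 1 (N - D) * q) N = c"
      using False q(3) by (simp add: coeff_monom_mult)
    ultimately show ?thesis by blast
  qed
  have claim3: "\<forall>p. p \<in> I \<longrightarrow> degree p \<le> N \<longrightarrow> p \<in> span_in (Rp R) G" for N
  proof (induction N)
    case 0
    show ?case
    proof (intro allI impI)
      fix p assume p: "p \<in> I" "degree p \<le> 0"
      then have "coeff p 0 \<in> L 0" unfolding L_def by blast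
      then obtain q where q: "q \<in> span_in (Rp R) G" "degree q \<le> 0" "coeff q 0 = coeff p 0"
        using claim2 by blast
      have "degree p = 0" "degree q = 0" using p q by auto
      then have "p = [:coeff p 0:]" "q = [:coeff q 0:]" using degree_0_id by metis+
      then have "p = q" using q(3) by metis
      then show "p \<in> span_in (Rp R) G" using q by simp
    qed
  next
    case (Suc N)
    show ?case
    proof (intro allI impI)
      fix p assume p: "p \<in> I" "degree p \<le> Suc N"
      then have "coeff p (Suc N) \<in> L (Suc N)" unfolding L_def by blast
      then obtain q where q: "q \<in> span_in (Rp R) G" "degree q \<le> Suc N" "coeff q (Suc N) = coeff p (Suc N)"
        using claim2 by blast
      define r where "r = p - q"
      have rI: "r \<in> I" unfolding r_def using p(1) q(1) spanGI Iminus by blast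
      have "degree r \<le> Suc N" unfolding r_def using p(2) q(2) degree_diff_le by blast
      moreover have "coeff r (Suc N) = 0" unfolding r_def using q(3) by simp
      ultimately have "degree r \<le> N"
      proof -
        assume a1: "degree r \<le> Suc N" and a2: "coeff r (Suc N) = 0"
        show "degree r \<le> N"
        proof (rule ccontr)
          assume "\<not> degree r \<le> N"
          then have "degree r = Suc N" using a1 by simp
          then have "lead_coeff r = 0" using a2 by simp
          then have "r = 0" by simp
          then show False using \<open>degree r = Suc N\<close> by simp
        qed
      qed
      then have "r \<in> span_in (Rp R) G" using Suc rI by blast
      then have "r + q \<in> span_in (Rp R) G" using q(1) by (rule span_in.spa)
      then show "p \<in> span_in (Rp R) G" unfolding r_def by simp
    qed
  qed
  have SG: "S \<subseteq> span_in (Rp R) G"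
  proof
    fix s assume "s \<in> S"
    then have "s \<in> I" unfolding I_def by (rule span_in.spb)
    then show "s \<in> span_in (Rp R) G" using claim3 by blast
  qed
  have "\<forall>g\<in>G. \<exists>Sg. Sg \<subseteq> S \<and> finite Sg \<and> g \<in> span_in (Rp R) Sg"
    using GI span_finite unfolding I_def by blast
  then obtain Sg where Sg0: "\<forall>g\<in>G. Sg g \<subseteq> S \<and> finite (Sg g) \<and> g \<in> span_in (Rp R) (Sg g)"
    by (auto dest!: bchoice)
  then have Sg: "\<And>g. g \<in> G \<Longrightarrow> Sg g \<subseteq> S \<and> finite (Sg g) \<and> g \<in> span_in (Rp R) (Sg g)"
    by auto
  define S0 where "S0 = (\<Union>g\<in>G. Sg g)"
  have "S0 \<subseteq> S" "finite S0" unfolding S0_def using Sg finG by auto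
  moreover have "G \<subseteq> span_in (Rp R) S0"
  proof
    fix g assume g: "g \<in> G"
    then have "Sg g \<subseteq> S0" unfolding S0_def by auto
    then show "g \<in> span_in (Rp R) S0" using Sg[OF g] span_mono by blast
  qed
  then have "S \<subseteq> span_in (Rp R) S0" using SG span_span by blast
  ultimately show "\<exists>S0\<subseteq>S. finite S0 \<and> S \<subseteq> span_in (Rp R) S0" by blast
qed


definition ext :: "'a::comm_ring_1 set \<Rightarrow> 'a \<Rightarrow> 'a set" where
  "ext R X = {poly p X | p. p \<in> Rp R}"

lemma noeth_ext:
  assumes R: "subr R" "noeth R" shows "noeth (ext R X)"
  unfolding noeth_def
proof (intro allI impI)
  fix T assume T: "T \<subseteq> ext R X"
  define T' where "T' = {p \<in> Rp R. poly p X \<in> T}"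
  have N: "noeth (Rp R)" using hilbert R by blast
  have "T' \<subseteq> Rp R" by (auto simp: T'_def)
  then obtain T0 where T0: "T0 \<subseteq> T'" "finite T0" "T' \<subseteq> span_in (Rp R) T0"
    using N[unfolded noeth_def, rule_format, OF \<open>T' \<subseteq> Rp R\<close>] by blast
  have map: "poly p X \<in> span_in (ext R X) ((\<lambda>p. poly p X) ` T0)" if "p \<in> span_in (Rp R) T0" for p
    using that
  proof (induction rule: span_in.induct)
    case sp0 then show ?case using span_in.sp0 by simp
  next
    case (spb s) then show ?case by (auto intro: span_in.spb)
  next
    case (spa x y) then show ?case by (simp add: span_in.spa)
  next
    case (spm r x)
    have "poly r X \<in> ext R X" using spm(1) by (auto simp: ext_def)
    then show ?case using spm(3) by (simp add: span_in.spm)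
  qed
  show "\<exists>S0\<subseteq>T. finite S0 \<and> T \<subseteq> span_in (ext R X) S0"
  proof (intro exI[of _ "(\<lambda>p. poly p X) ` T0"] conjI)
    show "(\<lambda>p. poly p X) ` T0 \<subseteq> T" using T0(1) by (auto simp: T'_def)
    show "finite ((\<lambda>p. poly p X) ` T0)" using T0(2) by simp
    show "T \<subseteq> span_in (ext R X) ((\<lambda>p. poly p X) ` T0)"
    proof
      fix t assume "t \<in> T"
      then obtain p where p: "p \<in> Rp R" "t = poly p X" using T by (auto simp: ext_def)
      then have "p \<in> T'" using \<open>t \<in> T\<close> by (auto simp: T'_def)
      then show "t \<in> span_in (ext R X) ((\<lambda>p. poly p X) ` T0)" using p(2) T0(3) map by blast
    qed
  qed
qed

inductive_set pvars :: "'n set \<Rightarrow> (('n \<Rightarrow> 'k::field) \<Rightarrow> 'k) set" for V where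
  vconst: "(\<lambda>_. c) \<in> pvars V"
| vvar: "i \<in> V \<Longrightarrow> (\<lambda>x. x i) \<in> pvars V"
| vadd: "f \<in> pvars V \<Longrightarrow> g \<in> pvars V \<Longrightarrow> f + g \<in> pvars V"
| vmul: "f \<in> pvars V \<Longrightarrow> g \<in> pvars V \<Longrightarrow> f * g \<in> pvars V"

lemma polyfun_pvars: "(polyfun :: (('n \<Rightarrow> 'k::field) \<Rightarrow> 'k) set) = pvars UNIV"
proof
  show "polyfun \<subseteq> (pvars UNIV :: (('n \<Rightarrow> 'k) \<Rightarrow> 'k) set)"
  proof
    fix f :: "('n \<Rightarrow> 'k) \<Rightarrow> 'k" assume "f \<in> polyfun"
    then show "f \<in> pvars UNIV"
    proof (induction rule: polyfun.induct)
      case (padd f g) then show ?case using vadd[of f UNIV g] by (simp add: plus_fun_def)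
    next
      case (pmul f g) then show ?case using vmul[of f UNIV g] by (simp add: times_fun_def)
    next
      case (pconst c) then show ?case by (rule vconst)
    next
      case (pvar i) then show ?case by (intro vvar) simp
    qed
  qed
  show "(pvars UNIV :: (('n \<Rightarrow> 'k) \<Rightarrow> 'k) set) \<subseteq> polyfun"
  proof
    fix f :: "('n \<Rightarrow> 'k) \<Rightarrow> 'k" assume "f \<in> pvars UNIV"
    then show "f \<in> polyfun"
    proof (induction rule: pvars.induct)
      case (vadd f g) then show ?case using padd[of f g] by (simp add: plus_fun_def)
    next
      case (vmul f g) then show ?case using pmul[of f g] by (simp add: times_fun_def)
    next
      case (vconst c) then show ?case by (rule pconst)
    next
      case (vvar i) show ?case by (rule polyfun.pvar)
    qed
  qed
qed

lemma pvars_zero: "0 \<in> pvars V"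
  using vconst[of 0 V] by (simp add: zero_fun_def)

lemma pvars_one: "1 \<in> pvars V"
  using vconst[of 1 V] by (simp add: one_fun_def)

lemma subr_pvars: "subr (pvars V)"
proof -
  have "- f \<in> pvars V" if "f \<in> pvars V" for f
  proof -
    have "(\<lambda>_. -1) * f \<in> pvars V" using that by (intro vmul vconst)
    moreover have "(\<lambda>_. -1) * f = - f" by (auto simp: times_fun_def)
    ultimately show ?thesis by simp
  qed
  then show ?thesis unfolding subr_def using pvars_zero pvars_one vadd vmul by blast
qed

lemma pvars_mono: "f \<in> pvars V \<Longrightarrow> V \<subseteq> W \<Longrightarrow> f \<in> pvars W"
  by (induction rule: pvars.induct) (auto intro: vconst vvar vadd vmul)

lemma ext_closed:
  assumes R: "subr R"
  shows "x \<in> ext R X \<Longrightarrow> y \<in> ext R X \<Longrightarrow> x + y \<in> ext R X"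
    and "x \<in> ext R X \<Longrightarrow> y \<in> ext R X \<Longrightarrow> x * y \<in> ext R X"
    and "r \<in> R \<Longrightarrow> r \<in> ext R X"
    and "X \<in> ext R X"
proof -
  have RR: "subr (Rp R)" using R by (rule subr_Rp)
  show "x \<in> ext R X \<Longrightarrow> y \<in> ext R X \<Longrightarrow> x + y \<in> ext R X"
  proof -
    assume "x \<in> ext R X" "y \<in> ext R X"
    then obtain p q where "p \<in> Rp R" "q \<in> Rp R" "x = poly p X" "y = poly q X" by (auto simp: ext_def)
    then show ?thesis using RR unfolding ext_def subr_def by (intro CollectI exI[of _ "p + q"]) auto
  qed
  show "x \<in> ext R X \<Longrightarrow> y \<in> ext R X \<Longrightarrow> x * y \<in> ext R X"
  proof -
    assume "x \<in> ext R X" "y \<in> ext R X"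
    then obtain p q where "p \<in> Rp R" "q \<in> Rp R" "x = poly p X" "y = poly q X" by (auto simp: ext_def)
    then show ?thesis using RR unfolding ext_def subr_def by (intro CollectI exI[of _ "p * q"]) auto
  qed
  show "r \<in> R \<Longrightarrow> r \<in> ext R X"
    using R unfolding ext_def Rp_def subr_def
    by (intro CollectI exI[of _ "[:r:]"]) (auto simp: coeff_pCons split: nat.split)
  show "X \<in> ext R X"
    using R unfolding ext_def Rp_def subr_def
    by (intro CollectI exI[of _ "[:0,1:]"]) (auto simp: coeff_pCons split: nat.split)
qed

lemma pvars_insert: "pvars (insert v V) = ext (pvars V) (\<lambda>x. x v)"
proof
  have R: "subr (pvars V)" by (rule subr_pvars)
  show "pvars (insert v V) \<subseteq> ext (pvars V) (\<lambda>x. x v)"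
  proof
    fix f assume "f \<in> pvars (insert v V)"
    then show "f \<in> ext (pvars V) (\<lambda>x. x v)"
    proof (induction rule: pvars.induct)
      case (vconst c) then show ?case using ext_closed(3)[OF R] pvars.vconst by blast
    next
      case (vvar i)
      show ?case
      proof (cases "i = v")
        case True then show ?thesis using ext_closed(4)[OF R] by simp
      next
        case False
        then have "i \<in> V" using vvar by simp
        then have "(\<lambda>x. x i) \<in> pvars V" by (rule pvars.vvar)
        then show ?thesis by (rule ext_closed(3)[OF R])
      qed
    next
      case (vadd f g) then show ?case using ext_closed(1)[OF R] by blast
    next
      case (vmul f g) then show ?case using ext_closed(2)[OF R] by blast
    qed
  qed
  show "ext (pvars V) (\<lambda>x. x v) \<subseteq> pvars (insert v V)"
  proof
    fix f assume "f \<in> ext (pvars V) (\<lambda>x. x v)"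
    then obtain p where p: "p \<in> Rp (pvars V)" "f = poly p (\<lambda>x. x v)" by (auto simp: ext_def)
    have "poly p (\<lambda>x. x v) \<in> pvars (insert v V)" using p(1)
    proof (induction p rule: pCons_induct)
      case 0 then show ?case by (simp add: zero_fun_def vconst)
    next
      case (pCons a p)
      have "\<forall>i. coeff (pCons a p) i \<in> pvars V" using pCons(3) by (simp add: Rp_def)
      then have "coeff (pCons a p) 0 \<in> pvars V" by blast
      then have "a \<in> pvars V" by simp
      then have a: "a \<in> pvars (insert v V)" by (rule pvars_mono) auto
      have "coeff p i \<in> pvars V" for i
      proof -
        have "coeff (pCons a p) (Suc i) \<in> pvars V" using \<open>\<forall>i. coeff (pCons a p) i \<in> pvars V\<close> by blast
        then show ?thesis by simp
      qed
      then have "p \<in> Rp (pvars V)" unfolding Rp_def by blast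
      then have "poly p (\<lambda>x. x v) \<in> pvars (insert v V)" using pCons(2) by blast
      moreover have "(\<lambda>x. x v) \<in> pvars (insert v V)" by (rule vvar) simp
      ultimately have "a + (\<lambda>x. x v) * poly p (\<lambda>x. x v) \<in> pvars (insert v V)"
        using a by (intro vadd vmul)
      then show ?case by (simp only: poly_pCons)
    qed
    then show "f \<in> pvars (insert v V)" using p(2) by simp
  qed
qed

lemma noeth_pvars_empty: "noeth (pvars {} :: (('n \<Rightarrow> 'k::field) \<Rightarrow> 'k) set)"
  unfolding noeth_def
proof (intro allI impI)
  fix S :: "(('n \<Rightarrow> 'k) \<Rightarrow> 'k) set" assume S: "S \<subseteq> pvars {}"
  have const: "\<exists>c. f = (\<lambda>_. c)" if "f \<in> (pvars {} :: (('n \<Rightarrow> 'k) \<Rightarrow> 'k) set)" for f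
    using that by (induction rule: pvars.induct) auto
  show "\<exists>S0\<subseteq>S. finite S0 \<and> S \<subseteq> span_in (pvars {}) S0"
  proof (cases "S \<subseteq> {0}")
    case True
    then show ?thesis by (intro exI[of _ "{}"]) (auto intro: span_in.sp0)
  next
    case False
    then obtain s where s: "s \<in> S" "s \<noteq> 0" by blast
    then obtain c where c: "s = (\<lambda>_. c)" using S const by blast
    have c0: "c \<noteq> 0" using s(2) c by (auto simp: zero_fun_def)
    show ?thesis
    proof (intro exI[of _ "{s}"] conjI)
      show "S \<subseteq> span_in (pvars {}) {s}"
      proof
        fix t assume "t \<in> S"
        then obtain e where e: "t = (\<lambda>_. e)" using S const by blast
        have "(\<lambda>_. e / c) * s \<in> span_in (pvars {}) {s}"
          by (intro span_in.spm vconst span_in.spb) simp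
        moreover have "(\<lambda>_. e / c) * s = t" using c c0 e by (auto simp: times_fun_def)
        ultimately show "t \<in> span_in (pvars {}) {s}" by simp
      qed
    qed (use s in auto)
  qed
qed

lemma noeth_pvars: "finite V \<Longrightarrow> noeth (pvars V :: (('n \<Rightarrow> 'k::field) \<Rightarrow> 'k) set)"
proof (induction V rule: finite_induct)
  case empty then show ?case by (rule noeth_pvars_empty)
next
  case (insert v V)
  then show ?case unfolding pvars_insert using subr_pvars noeth_ext by blast
qed

lemma noeth_polyfun: "noeth (polyfun :: (('n::finite \<Rightarrow> 'k::field) \<Rightarrow> 'k) set)"
  unfolding polyfun_pvars by (rule noeth_pvars) simp

lemma span_vanish: "g \<in> span_in R F0 \<Longrightarrow> (\<forall>f\<in>F0. f x = 0) \<Longrightarrow> g x = (0::'k::field)"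
  by (induction rule: span_in.induct) auto

lemma zero_basis:
  fixes F :: "(('n::finite \<Rightarrow> 'k::field) \<Rightarrow> 'k) set"
  assumes "F \<subseteq> polyfun"
  shows "\<exists>F0\<subseteq>F. finite F0 \<and> (\<forall>x. (\<forall>f\<in>F0. f x = 0) \<longrightarrow> (\<forall>f\<in>F. f x = 0))"
proof -
  obtain F0 where "F0 \<subseteq> F" "finite F0" "F \<subseteq> span_in polyfun F0"
    using noeth_polyfun[unfolded noeth_def, rule_format, OF assms] by blast
  moreover have "\<forall>x. (\<forall>f\<in>F0. f x = 0) \<longrightarrow> (\<forall>f\<in>F. f x = 0)"
  proof (intro allI impI ballI)
    fix x f assume "\<forall>f\<in>F0. f x = 0" "f \<in> F"
    then show "f x = 0" using span_vanish[of f polyfun F0 x] \<open>F \<subseteq> span_in polyfun F0\<close> by blast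
  qed
  ultimately show ?thesis by blast
qed




lemma line_mem: "y \<in> line y"
  unfolding line_def by (rule CollectI, rule exI[of _ 1]) simp

lemma line_ne: "line y \<noteq> {}"
  using line_mem by blast

lemma homog_scale: "homog d f \<Longrightarrow> f (\<lambda>i. c * x i) = c ^ d * f x"
  by (simp add: homog_def)

lemma homog_line:
  assumes "homog d f" "x \<in> line y"
  shows "f x = 0 \<longleftrightarrow> f y = 0"
proof -
  obtain c where c: "c \<noteq> 0" "x = (\<lambda>i. c * y i)" using assms(2) unfolding line_def by blast
  then have "f x = c ^ d * f y" using homog_scale[OF assms(1)] by simp
  then show ?thesis using c(1) by simp
qed

lemma homog_line_all:
  assumes "homog d f"
  shows "(\<forall>x\<in>line y. f x = 0) \<longleftrightarrow> f y = 0"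
  using homog_line[OF assms] line_mem by blast

lemma zclosed_sub: "zclosed Z \<Longrightarrow> Z \<subseteq> PP"
  unfolding zclosed_def by blast

lemma zclosed_PP: "zclosed PP"
  unfolding zclosed_def by (intro exI[of _ "{}"]) auto

lemma zclosed_empty: "zclosed ({} :: ('n \<Rightarrow> 'k::field) set set)"
  unfolding zclosed_def
proof (intro exI[of _ "{\<lambda>_. 1 :: 'k}"] conjI)
  show "\<forall>f\<in>{\<lambda>_. 1::'k}. \<exists>d. homog d f"
    by (auto simp: homog_def intro!: exI[of _ 0] pconst)
  show "{} = {p \<in> PP. \<forall>f\<in>{\<lambda>_. 1::'k}. \<forall>x\<in>p. f x = 0}"
    unfolding PP_def using line_ne by auto
qed

lemma zclosed_Int:
  assumes "zclosed A" "zclosed B" shows "zclosed (A \<inter> B)"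
proof -
  obtain F where F: "\<forall>f\<in>F. \<exists>d. homog d f" "A = {p\<in>PP. \<forall>f\<in>F. \<forall>x\<in>p. f x = 0}"
    using assms(1) unfolding zclosed_def by blast
  obtain G where G: "\<forall>f\<in>G. \<exists>d. homog d f" "B = {p\<in>PP. \<forall>f\<in>G. \<forall>x\<in>p. f x = 0}"
    using assms(2) unfolding zclosed_def by blast
  show ?thesis unfolding zclosed_def
    by (intro exI[of _ "F \<union> G"]) (use F G in auto)
qed

lemma zclosed_Inter:
  assumes "\<C> \<noteq> {}" "\<forall>C\<in>\<C>. zclosed C" shows "zclosed (\<Inter>\<C>)"
proof -
  have "\<forall>C\<in>\<C>. \<exists>F. (\<forall>f\<in>F. \<exists>d. homog d f) \<and> C = {p\<in>PP. \<forall>f\<in>F. \<forall>x\<in>p. f x = 0}"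
    using assms(2) unfolding zclosed_def by blast
  then obtain FF where FF: "\<forall>C\<in>\<C>. (\<forall>f\<in>FF C. \<exists>d. homog d f) \<and> C = {p\<in>PP. \<forall>f\<in>FF C. \<forall>x\<in>p. f x = 0}"
    by (auto dest!: bchoice)
  show ?thesis unfolding zclosed_def
  proof (intro exI[of _ "\<Union>C\<in>\<C>. FF C"] conjI)
    show "\<forall>f\<in>\<Union>C\<in>\<C>. FF C. \<exists>d. homog d f" using FF by blast
    show "\<Inter>\<C> = {p \<in> PP. \<forall>f\<in>\<Union>C\<in>\<C>. FF C. \<forall>x\<in>p. f x = 0}"
    proof
      show "\<Inter>\<C> \<subseteq> {p \<in> PP. \<forall>f\<in>\<Union>C\<in>\<C>. FF C. \<forall>x\<in>p. f x = 0}"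
      proof
        fix p assume p: "p \<in> \<Inter>\<C>"
        obtain C0 where "C0 \<in> \<C>" using assms(1) by blast
        then have "p \<in> PP" using p FF by blast
        moreover have "\<forall>f\<in>\<Union>C\<in>\<C>. FF C. \<forall>x\<in>p. f x = 0"
        proof
          fix f assume "f \<in> (\<Union>C\<in>\<C>. FF C)"
          then obtain C where "C \<in> \<C>" "f \<in> FF C" by blast
          then show "\<forall>x\<in>p. f x = 0" using p FF by blast
        qed
        ultimately show "p \<in> {p \<in> PP. \<forall>f\<in>\<Union>C\<in>\<C>. FF C. \<forall>x\<in>p. f x = 0}" by blast
      qed
      show "{p \<in> PP. \<forall>f\<in>\<Union>C\<in>\<C>. FF C. \<forall>x\<in>p. f x = 0} \<subseteq> \<Inter>\<C>"
      proof
        fix p assume p: "p \<in> {p \<in> PP. \<forall>f\<in>\<Union>C\<in>\<C>. FF C. \<forall>x\<in>p. f x = 0}"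
        show "p \<in> \<Inter>\<C>"
        proof
          fix C assume C: "C \<in> \<C>"
          then have "C = {p\<in>PP. \<forall>f\<in>FF C. \<forall>x\<in>p. f x = 0}" using FF by blast
          then show "p \<in> C" using p C by blast
        qed
      qed
    qed
  qed
qed

lemma homog_mult: "homog d f \<Longrightarrow> homog e g \<Longrightarrow> homog (d + e) (\<lambda>x. f x * g x)"
  unfolding homog_def by (auto intro: pmul simp: power_add)

lemma zclosed_Un:
  assumes "zclosed A" "zclosed B" shows "zclosed (A \<union> B)"
proof -
  obtain F where F: "\<forall>f\<in>F. \<exists>d. homog d f" "A = {p\<in>PP. \<forall>f\<in>F. \<forall>x\<in>p. f x = 0}"
    using assms(1) unfolding zclosed_def by blast
  obtain G where G: "\<forall>f\<in>G. \<exists>d. homog d f" "B = {p\<in>PP. \<forall>f\<in>G. \<forall>x\<in>p. f x = 0}"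
    using assms(2) unfolding zclosed_def by blast
  define H where "H = {(\<lambda>x. f x * g x) | f g. f \<in> F \<and> g \<in> G}"
  show ?thesis unfolding zclosed_def
  proof (intro exI[of _ H] conjI)
    show "\<forall>h\<in>H. \<exists>d. homog d h" unfolding H_def using F(1) G(1) homog_mult by blast
    show "A \<union> B = {p \<in> PP. \<forall>f\<in>H. \<forall>x\<in>p. f x = 0}"
    proof
      show "A \<union> B \<subseteq> {p \<in> PP. \<forall>f\<in>H. \<forall>x\<in>p. f x = 0}"
        unfolding H_def F(2) G(2) by auto
      show "{p \<in> PP. \<forall>f\<in>H. \<forall>x\<in>p. f x = 0} \<subseteq> A \<union> B"
      proof
        fix p assume p: "p \<in> {p \<in> PP. \<forall>f\<in>H. \<forall>x\<in>p. f x = 0}"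
        then obtain y where y: "p = line y" "nonzero_vec y" unfolding PP_def by blast
        show "p \<in> A \<union> B"
        proof (rule ccontr)
          assume "p \<notin> A \<union> B"
          then obtain f g where fg: "f \<in> F" "g \<in> G" "\<not> (\<forall>x\<in>p. f x = 0)" "\<not> (\<forall>x\<in>p. g x = 0)"
            using p unfolding F(2) G(2) by blast
          obtain d e where "homog d f" "homog e g" using fg F(1) G(1) by blast
          then have "f y \<noteq> 0" "g y \<noteq> 0" using fg(3,4) homog_line_all y(1) by blast+
          moreover have "(\<lambda>x. f x * g x) \<in> H" unfolding H_def using fg by blast
          moreover have "\<forall>h\<in>H. \<forall>x\<in>p. h x = 0" using p by blast
          ultimately have hv: "\<forall>x\<in>p. f x * g x = 0" by (metis (no_types, lifting) bspec)
          have "y \<in> p" using y(1) line_mem[of y] by simp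
          then have "f y * g y = 0" using hv by blast
          then show False using \<open>f y \<noteq> 0\<close> \<open>g y \<noteq> 0\<close> by simp
        qed
      qed
    qed
  qed
qed

lemma zclosed_Union:
  "finite \<Y> \<Longrightarrow> (\<forall>A\<in>\<Y>. zclosed A) \<Longrightarrow> zclosed (\<Union>\<Y>)"
  by (induction \<Y> rule: finite_induct) (auto intro: zclosed_empty zclosed_Un)

definition JJ :: "('n \<Rightarrow> 'k::field) set set \<Rightarrow> (('n \<Rightarrow> 'k) \<Rightarrow> 'k) set" where
  "JJ Z = {f \<in> polyfun. \<forall>p\<in>Z. \<forall>x\<in>p. f x = 0}"

lemma zclosed_JJ:
  assumes "zclosed Z"
  shows "Z = {p \<in> PP. \<forall>f\<in>JJ Z. \<forall>x\<in>p. f x = 0}"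
proof -
  obtain F where F: "\<forall>f\<in>F. \<exists>d. homog d f" "Z = {p\<in>PP. \<forall>f\<in>F. \<forall>x\<in>p. f x = 0}"
    using assms unfolding zclosed_def by blast
  have "F \<subseteq> JJ Z" unfolding JJ_def using F unfolding homog_def by blast
  then show ?thesis using F(2) unfolding JJ_def by blast
qed

lemma no_chain:
  fixes Z :: "nat \<Rightarrow> ('n::finite \<Rightarrow> 'k::field) set set"
  assumes cl: "\<And>i. zclosed (Z i)" and dec: "\<And>i. Z (Suc i) \<subset> Z i"
  shows False
proof -
  define F where "F = (\<Union>i. JJ (Z i))"
  have "F \<subseteq> polyfun" unfolding F_def JJ_def by blast
  then obtain F0 where F0: "F0 \<subseteq> F" "finite F0" "\<forall>x. (\<forall>f\<in>F0. f x = 0) \<longrightarrow> (\<forall>f\<in>F. f x = 0)"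
    using zero_basis[of F] by blast
  have "\<forall>f\<in>F0. \<exists>i. f \<in> JJ (Z i)" using F0(1) unfolding F_def by blast
  then obtain idx where idx: "\<forall>f\<in>F0. f \<in> JJ (Z (idx f))" by (auto dest!: bchoice)
  define N where "N = Max (idx ` F0)"
  have mono: "Z j \<subseteq> Z i" if "i \<le> j" for i j
    using that
  proof (induction j)
    case 0 then show ?case by simp
  next
    case (Suc j)
    then show ?case using dec[of j] by (metis le_SucE order.refl psubset_imp_subset subset_trans)
  qed
  have F0N: "F0 \<subseteq> JJ (Z N)"
  proof
    fix f assume f: "f \<in> F0"
    then have "idx f \<le> N" unfolding N_def using F0(2) by simp
    then have "Z N \<subseteq> Z (idx f)" by (rule mono)
    then show "f \<in> JJ (Z N)" using idx f unfolding JJ_def by blast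
  qed
  have "JJ (Z (Suc N)) \<subseteq> JJ (Z N)"
  proof
    fix g assume g: "g \<in> JJ (Z (Suc N))"
    then have gF: "g \<in> F" unfolding F_def by blast
    have "\<forall>p\<in>Z N. \<forall>x\<in>p. g x = 0"
    proof (intro ballI)
      fix p x assume "p \<in> Z N" "x \<in> p"
      then have "\<forall>f\<in>F0. f x = 0" using F0N unfolding JJ_def by blast
      then show "g x = 0" using F0(3) gF by blast
    qed
    then show "g \<in> JJ (Z N)" using g unfolding JJ_def by blast
  qed
  then have "Z N \<subseteq> Z (Suc N)"
    using zclosed_JJ[OF cl[of N]] zclosed_JJ[OF cl[of "Suc N"]] by blast
  then show False using dec[of N] by blast
qed

lemma decomp:
  fixes Z :: "('n::finite \<Rightarrow> 'k::field) set set"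
  assumes "zclosed Z"
  shows "\<exists>\<Y>. finite \<Y> \<and> (\<forall>Y\<in>\<Y>. irreducible_closed Y) \<and> Z = \<Union>\<Y>"
proof -
  define r :: "(('n \<Rightarrow> 'k) set set \<times> ('n \<Rightarrow> 'k) set set) set" where
    "r = {(A, B). zclosed A \<and> zclosed B \<and> A \<subset> B}"
  have wf: "wf r"
    unfolding wf_iff_no_infinite_down_chain
  proof
    assume "\<exists>f. \<forall>i. (f (Suc i), f i) \<in> r"
    then obtain f where f: "\<forall>i. (f (Suc i), f i) \<in> r" by blast
    have "zclosed (f i)" for i using f[rule_format, of i] unfolding r_def by blast
    moreover have "f (Suc i) \<subset> f i" for i using f[rule_format, of i] unfolding r_def by blast
    ultimately show False by (rule no_chain)
  qed
  show ?thesis using wf assms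
  proof (induction Z rule: wf_induct_rule)
    case (less Z)
    show ?case
    proof (cases "irreducible_closed Z")
      case True
      then show ?thesis by (intro exI[of _ "{Z}"]) auto
    next
      case False
      show ?thesis
      proof (cases "Z = {}")
        case True
        then show ?thesis by (intro exI[of _ "{}"]) auto
      next
        case ne: False
        then obtain A B where AB: "zclosed A" "zclosed B" "Z \<subseteq> A \<union> B" "\<not> Z \<subseteq> A" "\<not> Z \<subseteq> B"
          using False less.prems unfolding irreducible_closed_def by blast
        have cA: "zclosed (Z \<inter> A)" using less.prems AB(1) by (rule zclosed_Int)
        have cB: "zclosed (Z \<inter> B)" using less.prems AB(2) by (rule zclosed_Int)
        have "(Z \<inter> A, Z) \<in> r" unfolding r_def using cA less.prems AB(4) by blast
        then obtain YA where YA: "finite YA" "\<forall>Y\<in>YA. irreducible_closed Y" "Z \<inter> A = \<Union>YA"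
          using less.IH[of "Z \<inter> A"] cA by blast
        have "(Z \<inter> B, Z) \<in> r" unfolding r_def using cB less.prems AB(5) by blast
        then obtain YB where YB: "finite YB" "\<forall>Y\<in>YB. irreducible_closed Y" "Z \<inter> B = \<Union>YB"
          using less.IH[of "Z \<inter> B"] cB by blast
        have "Z = (Z \<inter> A) \<union> (Z \<inter> B)" using AB(3) by blast
        also have "\<dots> = \<Union>(YA \<union> YB)" using YA(3) YB(3) by simp
        finally show ?thesis
          by (intro exI[of _ "YA \<union> YB"]) (use YA YB in auto)
      qed
    qed
  qed
qed

lemma irr_in_union:
  assumes "irreducible_closed Y" "finite \<Y>" "\<forall>A\<in>\<Y>. zclosed A" "Y \<subseteq> \<Union>\<Y>"
  shows "\<exists>A\<in>\<Y>. Y \<subseteq> A"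
  using assms(2,3,4)
proof (induction \<Y> rule: finite_induct)
  case empty then show ?case using assms(1) unfolding irreducible_closed_def by auto
next
  case (insert A \<Y>)
  have "zclosed (\<Union>\<Y>)" using insert by (intro zclosed_Union) auto
  moreover have "zclosed A" using insert by auto
  moreover have "Y \<subseteq> A \<union> \<Union>\<Y>" using insert by auto
  ultimately have "Y \<subseteq> A \<or> Y \<subseteq> \<Union>\<Y>" using assms(1) unfolding irreducible_closed_def by blast
  then show ?case using insert by auto
qed

lemma component_split:
  fixes Z :: "('n::finite \<Rightarrow> 'k::field) set set"
  assumes "zclosed Z" "irr_component Y Z"
  shows "\<exists>Oc. zclosed Oc \<and> Z = Y \<union> Oc \<and> \<not> Y \<subseteq> Oc"
proof -
  obtain \<Y> where Y: "finite \<Y>" "\<forall>Y\<in>\<Y>. irreducible_closed Y" "Z = \<Union>\<Y>"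
    using decomp[OF assms(1)] by blast
  have cl: "\<forall>A\<in>\<Y>. zclosed A" using Y(2) unfolding irreducible_closed_def by blast
  have irY: "irreducible_closed Y" "Y \<subseteq> Z" using assms(2) unfolding irr_component_def by auto
  have maxi: "W = Y" if "W \<in> \<Y>" "Y \<subseteq> W" for W
    using assms(2) that Y unfolding irr_component_def by blast
  obtain A where "A \<in> \<Y>" "Y \<subseteq> A" using irr_in_union[OF irY(1) Y(1) cl] irY(2) Y(3) by blast
  then have YY: "Y \<in> \<Y>" using maxi by blast
  define Oc where "Oc = \<Union>(\<Y> - {Y})"
  have "zclosed Oc" unfolding Oc_def using Y(1) cl by (intro zclosed_Union) auto
  moreover have "Z = Y \<union> Oc" unfolding Oc_def using Y(3) YY by blast
  moreover have "\<not> Y \<subseteq> Oc"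
  proof
    assume "Y \<subseteq> Oc"
    then obtain B where "B \<in> \<Y> - {Y}" "Y \<subseteq> B"
      using irr_in_union[OF irY(1), of "\<Y> - {Y}"] Y(1) cl unfolding Oc_def by blast
    then show False using maxi by blast
  qed
  ultimately show ?thesis by blast
qed




lemma mat_apply_id: "mat_apply mat_id x = x"
proof (rule ext)
  fix i
  have "mat_apply mat_id x i = (\<Sum>j\<in>UNIV. if i = j then x j else 0)"
    unfolding mat_apply_def mat_id_def by (rule sum.cong) auto
  then show "mat_apply mat_id x i = x i" by simp
qed

lemma mat_apply_mul: "mat_apply (mat_mul A B) x = mat_apply A (mat_apply B x)"
proof (rule ext)
  fix i
  have "mat_apply (mat_mul A B) x i = (\<Sum>j\<in>UNIV. \<Sum>l\<in>UNIV. A i l * B l j * x j)"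
    by (simp add: mat_apply_def mat_mul_def sum_distrib_right)
  also have "\<dots> = (\<Sum>l\<in>UNIV. \<Sum>j\<in>UNIV. A i l * B l j * x j)"
    by (rule sum.swap)
  also have "\<dots> = mat_apply A (mat_apply B x) i"
    by (simp add: mat_apply_def sum_distrib_left mult.assoc)
  finally show "mat_apply (mat_mul A B) x i = mat_apply A (mat_apply B x) i" .
qed

lemma cochar_one: "cochar a 1 = tone"
  by (simp add: cochar_def tone_def)

lemma cochar_torus: "c \<noteq> 0 \<Longrightarrow> cochar a c \<in> torus"
  by (simp add: cochar_def torus_def)

lemma cochar_mult: "cochar a (x * c) = tmul (cochar a x) (cochar a c)"
  by (simp add: cochar_def tmul_def power_int_mult_distrib)

lemma act_tone: "torus_rep \<rho> \<Longrightarrow> act \<rho> tone z = z"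
  by (simp add: torus_rep_def act_def mat_apply_id)

lemma act_mult:
  "torus_rep \<rho> \<Longrightarrow> t \<in> torus \<Longrightarrow> s \<in> torus \<Longrightarrow> act \<rho> (tmul t s) z = act \<rho> t (act \<rho> s z)"
  by (simp add: torus_rep_def act_def mat_apply_mul image_image)

lemma polyfun_curve:
  fixes \<phi> :: "'n \<Rightarrow> 'k::field poly"
  shows "g \<in> polyfun \<Longrightarrow> \<exists>q. \<forall>c. g (\<lambda>i. poly (\<phi> i) c) = poly q c"
proof (induction rule: polyfun.induct)
  case (pconst c) then show ?case by (intro exI[of _ "[:c:]"]) simp
next
  case (pvar i) then show ?case by (intro exI[of _ "\<phi> i"]) simp
next
  case (padd f g)
  then obtain q1 q2 where "\<forall>c. f (\<lambda>i. poly (\<phi> i) c) = poly q1 c" "\<forall>c. g (\<lambda>i. poly (\<phi> i) c) = poly q2 c" by blast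
  then show ?case by (intro exI[of _ "q1 + q2"]) simp
next
  case (pmul f g)
  then obtain q1 q2 where "\<forall>c. f (\<lambda>i. poly (\<phi> i) c) = poly q1 c" "\<forall>c. g (\<lambda>i. poly (\<phi> i) c) = poly q2 c" by blast
  then show ?case by (intro exI[of _ "q1 * q2"]) simp
qed

lemma curve_closed:
  fixes \<phi> :: "'n::finite \<Rightarrow> 'k::field poly"
  assumes C: "zclosed C" and nz: "\<forall>c. nonzero_vec (\<lambda>i. poly (\<phi> i) c)"
  shows "{c. line (\<lambda>i. poly (\<phi> i) c) \<in> C} = UNIV \<or> finite {c. line (\<lambda>i. poly (\<phi> i) c) \<in> C}"
proof -
  obtain F where F: "\<forall>f\<in>F. \<exists>d. homog d f" "C = {p\<in>PP. \<forall>f\<in>F. \<forall>x\<in>p. f x = 0}"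
    using C unfolding zclosed_def by blast
  show ?thesis
  proof (cases "\<forall>g\<in>F. \<forall>c. g (\<lambda>i. poly (\<phi> i) c) = 0")
    case True
    have "line (\<lambda>i. poly (\<phi> i) c) \<in> C" for c
    proof -
      have "line (\<lambda>i. poly (\<phi> i) c) \<in> PP" unfolding PP_def using nz by blast
      moreover have "\<forall>g\<in>F. \<forall>x\<in>line (\<lambda>i. poly (\<phi> i) c). g x = 0"
      proof
        fix g assume g: "g \<in> F"
        then obtain d where "homog d g" using F(1) by blast
        then show "\<forall>x\<in>line (\<lambda>i. poly (\<phi> i) c). g x = 0" using homog_line_all True g by blast
      qed
      ultimately show ?thesis using F(2) by blast
    qed
    then show ?thesis by blast
  next
    case False
    then obtain g c0 where g: "g \<in> F" "g (\<lambda>i. poly (\<phi> i) c0) \<noteq> 0" by blast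
    then obtain d where "homog d g" using F(1) by blast
    then have "g \<in> polyfun" unfolding homog_def by blast
    then obtain q where q: "\<forall>c. g (\<lambda>i. poly (\<phi> i) c) = poly q c" using polyfun_curve by blast
    then have "q \<noteq> 0" using g(2) by auto
    then have fin: "finite {c. poly q c = 0}" by (rule poly_roots_finite)
    have "{c. line (\<lambda>i. poly (\<phi> i) c) \<in> C} \<subseteq> {c. poly q c = 0}"
    proof
      fix c assume "c \<in> {c. line (\<lambda>i. poly (\<phi> i) c) \<in> C}"
      then have "\<forall>x\<in>line (\<lambda>i. poly (\<phi> i) c). g x = 0" using F(2) g(1) by blast
      then have "g (\<lambda>i. poly (\<phi> i) c) = 0" using line_mem by blast
      then show "c \<in> {c. poly q c = 0}" using q by simp
    qed
    then show ?thesis using fin finite_subset by blast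
  qed
qed

lemma alg_closed_infinite:
  assumes "alg_closed TYPE('k::field)"
  shows "infinite (UNIV :: 'k set)"
proof
  assume fin: "finite (UNIV :: 'k set)"
  define q :: "'k poly" where "q = (\<Prod>a\<in>UNIV. [:-a, 1:])"
  have "degree q = (\<Sum>a\<in>UNIV. degree [:-a, 1::'k:])"
    unfolding q_def by (rule degree_prod_eq_sum_degree) auto
  also have "\<dots> = card (UNIV :: 'k set)" by simp
  finally have dq: "degree q > 0" using fin by (simp add: card_gt_0_iff)
  have "degree (q + 1) = degree q" using dq by (intro degree_add_eq_left) simp
  then have "degree (q + 1) > 0" using dq by simp
  then obtain x where "poly (q + 1) x = 0" using assms unfolding alg_closed_def by blast
  moreover have "poly q x = 0" unfolding q_def poly_prod using fin
    by (simp add: prod_zero_iff)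
  ultimately show False by simp
qed

lemma stratum_inv:
  fixes \<rho> :: "('r \<Rightarrow> 'k::field) \<Rightarrow> ('n::finite \<Rightarrow> 'n \<Rightarrow> 'k)"
  assumes rep: "torus_rep \<rho>" and inv: "T_invariant \<rho> X"
    and z: "z \<in> bb_stratum \<rho> a X f" and c: "c \<noteq> 0"
  shows "act \<rho> (cochar a c) z \<in> bb_stratum \<rho> a X f"
proof -
  have zX: "z \<in> X" and bl: "bb_limit \<rho> a z f" using z unfolding bb_stratum_def by auto
  have "act \<rho> (cochar a c) z \<in> X" using inv zX cochar_torus[OF c] unfolding T_invariant_def by blast
  moreover
  obtain \<phi> :: "'n \<Rightarrow> 'k poly" where phi: "nonzero_vec (\<lambda>i. poly (\<phi> i) 0)" "line (\<lambda>i. poly (\<phi> i) 0) = f"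
    "\<forall>c. c \<noteq> 0 \<longrightarrow> nonzero_vec (\<lambda>i. poly (\<phi> i) c) \<and> line (\<lambda>i. poly (\<phi> i) c) = act \<rho> (cochar a c) z"
    using bl unfolding bb_limit_def by blast
  define \<psi> where "\<psi> i = pcompose (\<phi> i) [:0, c:]" for i
  have ps: "poly (\<psi> i) x = poly (\<phi> i) (x * c)" for i x
    unfolding \<psi>_def by (simp add: poly_pcompose)
  have "bb_limit \<rho> a (act \<rho> (cochar a c) z) f"
    unfolding bb_limit_def
  proof (intro exI[of _ \<psi>] conjI allI impI)
    show "nonzero_vec (\<lambda>i. poly (\<psi> i) 0)" using phi(1) by (simp add: ps)
    show "line (\<lambda>i. poly (\<psi> i) 0) = f" using phi(2) by (simp add: ps)
    fix x :: 'k assume x: "x \<noteq> 0"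
    then have xc: "x * c \<noteq> 0" using c by simp
    show "nonzero_vec (\<lambda>i. poly (\<psi> i) x)" using phi(3) xc by (simp add: ps)
    have "line (\<lambda>i. poly (\<psi> i) x) = act \<rho> (cochar a (x * c)) z" using phi(3) xc by (simp add: ps)
    also have "\<dots> = act \<rho> (cochar a x) (act \<rho> (cochar a c) z)"
      unfolding cochar_mult using act_mult[OF rep cochar_torus[OF x] cochar_torus[OF c]] by simp
    finally show "line (\<lambda>i. poly (\<psi> i) x) = act \<rho> (cochar a x) (act \<rho> (cochar a c) z)" .
  qed
  ultimately show ?thesis unfolding bb_stratum_def by blast
qed




theorem lemma3p3:
  fixes \<rho> :: "('r::finite \<Rightarrow> 'k::field) \<Rightarrow> ('n::finite \<Rightarrow> 'n \<Rightarrow> 'k)"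
    and a :: "'r \<Rightarrow> int"
    and X :: "('n \<Rightarrow> 'k) set set"
  assumes "alg_closed TYPE('k)"
    and "torus_rep \<rho>"
    and "zclosed X"
    and "T_invariant \<rho> X"
    and "finite (T_fixed \<rho> X)"
    and "S_fixed \<rho> a X = T_fixed \<rho> X"
  shows "(\<forall>Y f. irr_component Y X \<and> supporting_fp \<rho> a Y f \<longrightarrow> supporting_fp \<rho> a X f) \<and>
         (\<forall>f\<in>T_fixed \<rho> X. \<forall>Y. irr_component Y (zclosure (bb_stratum \<rho> a X f)) \<longrightarrow> f \<in> Y)"
proof -
  note ac = assms(1) and rep = assms(2) and Xc = assms(3) and inv = assms(4)
  have part1: "\<forall>Y f. irr_component Y X \<and> supporting_fp \<rho> a Y f \<longrightarrow> supporting_fp \<rho> a X f"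
  proof (intro allI impI, elim conjE)
    fix Y f assume Yc: "irr_component Y X" and sp: "supporting_fp \<rho> a Y f"
    obtain Oc where Oc: "zclosed Oc" "X = Y \<union> Oc" "\<not> Y \<subseteq> Oc" using component_split[OF Xc Yc] by blast
    have irY: "irreducible_closed Y" "Y \<subseteq> X" using Yc unfolding irr_component_def by auto
    obtain U where U: "U \<noteq> {}" "zopen_in Y U" "U \<subseteq> bb_stratum \<rho> a Y f" and fY: "f \<in> T_fixed \<rho> Y"
      using sp unfolding supporting_fp_def by blast
    have UY: "U \<subseteq> Y" "zclosed (Y - U)" using U(2) unfolding zopen_in_def by auto
    define U' where "U' = U - Oc"
    have "X - U' = (Y - U) \<union> Oc" unfolding U'_def using Oc(2) UY(1) by blast
    then have "zclosed (X - U')" using zclosed_Un[OF UY(2) Oc(1)] by simp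
    moreover have "U' \<subseteq> X" unfolding U'_def using UY(1) irY(2) by blast
    ultimately have "zopen_in X U'" unfolding zopen_in_def by blast
    moreover have "U' \<noteq> {}"
    proof
      assume "U' = {}"
      then have "Y \<subseteq> (Y - U) \<union> Oc" unfolding U'_def by blast
      then have "Y \<subseteq> Y - U \<or> Y \<subseteq> Oc" using irY(1) UY(2) Oc(1) unfolding irreducible_closed_def by blast
      then show False using U(1) UY(1) Oc(3) by blast
    qed
    moreover have "U' \<subseteq> bb_stratum \<rho> a X f" using U(3) irY(2) unfolding U'_def bb_stratum_def by blast
    moreover have "f \<in> T_fixed \<rho> X" using fY irY(2) unfolding T_fixed_def by blast
    ultimately show "supporting_fp \<rho> a X f" unfolding supporting_fp_def by blast
  qed
  have part2: "\<forall>f\<in>T_fixed \<rho> X. \<forall>Y. irr_component Y (zclosure (bb_stratum \<rho> a X f)) \<longrightarrow> f \<in> Y"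
  proof (intro ballI allI impI)
    fix f Y assume Yc: "irr_component Y (zclosure (bb_stratum \<rho> a X f))"
    define Xf where "Xf = bb_stratum \<rho> a X f"
    define W where "W = zclosure Xf"
    have XfX: "Xf \<subseteq> X" unfolding Xf_def bb_stratum_def by blast
    have XPP: "X \<subseteq> PP" using zclosed_sub[OF Xc] .
    have Wcl: "zclosed W" unfolding W_def zclosure_def
      by (rule zclosed_Inter) (use XfX XPP zclosed_PP in auto)
    have XfW: "Xf \<subseteq> W" unfolding W_def zclosure_def by blast
    have Wmin: "W \<subseteq> C" if "zclosed C" "Xf \<subseteq> C" for C unfolding W_def zclosure_def using that by blast
    have Yc': "irr_component Y W" using Yc unfolding W_def Xf_def .
    obtain Oc where Oc: "zclosed Oc" "W = Y \<union> Oc" "\<not> Y \<subseteq> Oc" using component_split[OF Wcl Yc'] by blast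
    have Ycl: "zclosed Y" using Yc' unfolding irr_component_def irreducible_closed_def by blast
    have "\<not> Xf \<subseteq> Oc"
    proof
      assume "Xf \<subseteq> Oc"
      then have "W \<subseteq> Oc" using Wmin Oc(1) by blast
      then show False using Oc(2,3) by blast
    qed
    then obtain z where z: "z \<in> Xf" "z \<notin> Oc" by blast
    obtain \<phi> :: "'n \<Rightarrow> 'k poly" where phi: "nonzero_vec (\<lambda>i. poly (\<phi> i) 0)" "line (\<lambda>i. poly (\<phi> i) 0) = f"
      "\<forall>c. c \<noteq> 0 \<longrightarrow> nonzero_vec (\<lambda>i. poly (\<phi> i) c) \<and> line (\<lambda>i. poly (\<phi> i) c) = act \<rho> (cochar a c) z"
      using z(1) unfolding Xf_def bb_stratum_def bb_limit_def by blast
    have nz: "\<forall>c. nonzero_vec (\<lambda>i. poly (\<phi> i) c)"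
    proof
      fix c show "nonzero_vec (\<lambda>i. poly (\<phi> i) c)"
        using phi(1) phi(3) by (cases "c = 0") auto
    qed
    have inW: "line (\<lambda>i. poly (\<phi> i) c) \<in> W" if "c \<noteq> 0" for c
    proof -
      have "act \<rho> (cochar a c) z \<in> Xf" using stratum_inv[OF rep inv z(1)[unfolded Xf_def] that]
        unfolding Xf_def .
      then show ?thesis using phi(3) that XfW by auto
    qed
    have "act \<rho> (cochar a (1::'k)) z = z" unfolding cochar_one by (rule act_tone[OF rep])
    then have one: "line (\<lambda>i. poly (\<phi> i) 1) = z" using phi(3) by simp
    define AY where "AY = {c. line (\<lambda>i. poly (\<phi> i) c) \<in> Y}"
    define AO where "AO = {c. line (\<lambda>i. poly (\<phi> i) c) \<in> Oc}"
    have "AO = UNIV \<or> finite AO" unfolding AO_def using curve_closed[OF Oc(1) nz] .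
    moreover have "1 \<notin> AO" unfolding AO_def using one z(2) by simp
    ultimately have finO: "finite AO" by blast
    have "AY = UNIV \<or> finite AY" unfolding AY_def using curve_closed[OF Ycl nz] .
    moreover have "UNIV \<subseteq> insert 0 (AY \<union> AO)" using inW Oc(2) unfolding AY_def AO_def by blast
    moreover have "infinite (UNIV :: 'k set)" using alg_closed_infinite[OF ac] .
    ultimately have "AY = UNIV" using finO by (meson finite_Un finite_insert finite_subset)
    then have "0 \<in> AY" by blast
    then show "f \<in> Y" unfolding AY_def using phi(2) by simp
  qed
  show ?thesis using part1 part2 by blast
qed


end
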